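(* Let $\mathfrak p=(p_1,p_2,p_3,p_4)$ be a quadruple of distinct points in $\partial\mathbf H^2_{\mathbb C}$, and let $$\mathbb X_1=\mathbb X(p_1,p_2,p_3,p_4),\qquad \mathbb X_2=\mathbb X(p_1,p_3,p_2,p_4),\qquad \mathbb X_3=\mathbb X(p_2,p_3,p_1,p_4)$$ be its Korányi–Reimann complex cross-ratios. Then $$|\mathbb X_1|^{1/2}+|\mathbb X_2|^{1/2}\ge 1\qquad\text{and}\qquad -1\le |\mathbb X_1|^{1/2}-|\mathbb X_2|^{1/2}\le 1.$$ Moreover, equality holds in one of these three inequalities if and only if all four points of $\mathfrak p$ lie on a common $\mathbb R$-circle. In that case $\mathbb X_1>0$ and $\mathbb X_2>0$ (positive reals), and, writing $\mathbb X_i^{1/2}$ for the positive square root: (1) $\mathbb X_1^{1/2}-\mathbb X_2^{1/2}=1$ if $p_1$ and $p_3$ separate $p_2$ and $p_4$ on that $\mathbb R$-circle; (2) $\mathbb X_2^{1/2}-\mathbb X_1^{1/2}=1$ if $p_1$ and $p_2$ separate $p_3$ and $p_4$; (3) $\mathbb X_1^{1/2}+\mathbb X_2^{1/2}=1$ if $p_1$ and $p_4$ separate $p_2$ and $p_3$.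
   Context: Let $\mathbb C^{2,1}$ denote $\mathbb C^3$ with the Hermitian form of signature $(2,1)$: $\langle \mathbf z,\mathbf w\rangle=z_1\overline{w_3}+z_2\overline{w_2}+z_3\overline{w_1}$. Let $V_0=\{\mathbf z\in\mathbb C^{2,1}\setminus\{0\}:\langle\mathbf z,\mathbf z\rangle=0\}$ and $V_-=\{\mathbf z:\langle\mathbf z,\mathbf z\rangle<0\}$, and let $\mathbb P:\mathbb C^{2,1}\setminus\{0\}\to\mathbb CP^2$ be the projectivization. Complex hyperbolic space is $\mathbf H^2_{\mathbb C}=\mathbb P(V_-)$ and its boundary is $\partial\mathbf H^2_{\mathbb C}=\mathbb P(V_0)$ (a 3-sphere). A lift of $p\in\partial\mathbf H^2_{\mathbb C}$ is any $\mathbf p\in V_0$ with $\mathbb P(\mathbf p)=p$. For distinct $p_1,\dots,p_4\in\partial\mathbf H^2_{\mathbb C}$ with lifts $\mathbf p_i$, the Korányi–Reimann complex cross-ratio is $$\mathbb X(p_1,p_2,p_3,p_4)=\frac{\langle\mathbf p_3,\mathbf p_1\rangle\langle\mathbf p_4,\mathbf p_2\rangle}{\langle\mathbf p_4,\mathbf p_1\rangle\langle\mathbf p_3,\mathbf p_2\rangle},$$ which is independent of the choice of lifts (distinct boundary points have nonzero pairing). The holomorphic isometry group of $\mathbf H^2_{\mathbb C}$ is $\mathrm{PU}(2,1)$, the projectivized group of linear maps preserving $\langle\cdot,\cdot\rangle$. An $\mathbb R$-circle is the boundary in $\partial\mathbf H^2_{\mathbb C}$ of a Lagrangian plane (an isometric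 image of real hyperbolic plane $\mathbf H^2_{\mathbb R}$ in $\mathbf H^2_{\mathbb C}$); equivalently, it is an image under $\mathrm{PU}(2,1)$ of the standard $\mathbb R$-circle $\mathbb P(V_0\cap\mathbb R^3)$. An $\mathbb R$-circle is a topological circle; for four distinct points on it, "$p_a$ and $p_b$ separate $p_c$ and $p_d$" means $p_c$ and $p_d$ lie in different components of the circle with $p_a,p_b$ removed. *)

theory Defs
  imports "HOL-Analysis.Analysis"
begin

text \<open>Vectors of C^{2,1} are elements of complex^3 (indices 1,2,3).\<close>

definition herm :: "complex^3 \<Rightarrow> complex^3 \<Rightarrow> complex" where
  "herm z w = z$1 * cnj (w$3) + z$2 * cnj (w$2) + z$3 * cnj (w$1)"

text \<open>A lift of a boundary point: nonzero null vector.\<close>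
definition null_vec :: "complex^3 \<Rightarrow> bool" where
  "null_vec z \<longleftrightarrow> z \<noteq> 0 \<and> herm z z = 0"

definition same_point :: "complex^3 \<Rightarrow> complex^3 \<Rightarrow> bool" where
  "same_point p q \<longleftrightarrow> (\<exists>c::complex. c \<noteq> 0 \<and> q = c *s p)"

definition KR_cross :: "complex^3 \<Rightarrow> complex^3 \<Rightarrow> complex^3 \<Rightarrow> complex^3 \<Rightarrow> complex" where
  "KR_cross p1 p2 p3 p4 =
     (herm p3 p1 * herm p4 p2) / (herm p4 p1 * herm p3 p2)"

definition unitary21 :: "complex^3^3 \<Rightarrow> bool" where
  "unitary21 A \<longleftrightarrow> (\<forall>z w. herm (A *v z) (A *v w) = herm z w)"

definition real_vec :: "complex^3 \<Rightarrow> bool" where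
  "real_vec r \<longleftrightarrow> (\<forall>i. r$i \<in> \<real>)"

text \<open>The point p lies on the R-circle A(P(V_0 \<inter> R^3)).\<close>
definition on_R_circle :: "complex^3^3 \<Rightarrow> complex^3 \<Rightarrow> bool" where
  "on_R_circle A p \<longleftrightarrow> unitary21 A \<and>
     (\<exists>r. real_vec r \<and> null_vec r \<and> same_point (A *v r) p)"

definition concyclic_R :: "complex^3 \<Rightarrow> complex^3 \<Rightarrow> complex^3 \<Rightarrow> complex^3 \<Rightarrow> bool" where
  "concyclic_R p1 p2 p3 p4 \<longleftrightarrow>
     (\<exists>A. on_R_circle A p1 \<and> on_R_circle A p2 \<and> on_R_circle A p3 \<and> on_R_circle A p4)"

text \<open>Angular parametrisation of the standard R-circle P(V_0 \<inter> R^3):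
  theta in [0, 2pi) maps bijectively onto it (a homeomorphism of the circle R/2piZ).\<close>
definition std_R_pt :: "real \<Rightarrow> complex^3" where
  "std_R_pt t = (\<chi> i. if i = 1 then complex_of_real (1 + cos t)
                      else if i = 2 then complex_of_real (sin t)
                      else complex_of_real (- (1 - cos t) / 2))"

definition R_circle_param :: "complex^3^3 \<Rightarrow> real \<Rightarrow> complex^3 \<Rightarrow> bool" where
  "R_circle_param A t p \<longleftrightarrow> unitary21 A \<and> 0 \<le> t \<and> t < 2 * pi \<and>
     same_point (A *v std_R_pt t) p"

text \<open>On a circle parametrised by [0,2pi), the points with parameters a,b separate
  those with parameters c,d iff exactly one of c,d lies in the open arc between a and b.\<close>
definition separates :: "real \<Rightarrow> real \<Rightarrow> real \<Rightarrow> real \<Rightarrow> bool" where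
  "separates a b c d \<longleftrightarrow>
     ((min a b < c \<and> c < max a b) \<noteq> (min a b < d \<and> d < max a b))"

end

theory Submission
  imports Defs
begin
lemma mult_cnj_zero: "z * cnj z = 0 \<longleftrightarrow> (z::complex) = 0"
  by (metis complex_cnj_zero_iff mult_eq_0_iff)


lemma vec3_eq: "(x::complex^3) = y \<longleftrightarrow> x$1 = y$1 \<and> x$2 = y$2 \<and> x$3 = y$3"
  by (simp add: vec_eq_iff forall_3)

lemma herm_cnj: "cnj (herm z w) = herm w z"
  by (simp add: herm_def algebra_simps)

lemma herm_scaleL: "herm (c *s z) w = c * herm z w"
  by (simp add: herm_def algebra_simps)

lemma herm_scaleR: "herm z (c *s w) = cnj c * herm z w"
  by (simp add: herm_def algebra_simps)

lemma herm_addL: "herm (x + y) w = herm x w + herm y w"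
  by (simp add: herm_def algebra_simps)
lemma herm_addR: "herm w (x + y) = herm w x + herm w y"
  by (simp add: herm_def algebra_simps)
lemma herm_diffL: "herm (x - y) w = herm x w - herm y w"
  by (simp add: herm_def algebra_simps)
lemma herm_diffR: "herm w (x - y) = herm w x - herm w y"
  by (simp add: herm_def algebra_simps)
lemma herm_zeroL[simp]: "herm 0 w = 0" by (simp add: herm_def)
lemma herm_zeroR[simp]: "herm w 0 = 0" by (simp add: herm_def)

lemma mv3: "(A::complex^3^3) *v z = z$1 *s column 1 A + z$2 *s column 2 A + z$3 *s column 3 A"
  by (simp add: vec3_eq matrix_vector_mult_def sum_3 column_def algebra_simps)

lemma herm_pair_nonzero_aux:
  fixes p q :: "complex^3"
  assumes "null_vec p" "null_vec q" "herm p q = 0" "p$3 = 0"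
  shows "same_point p q"
proof -
  have hp: "p$1 * cnj (p$3) + p$2 * cnj (p$2) + p$3 * cnj (p$1) = 0" using assms(1) by (simp add: null_vec_def herm_def)
  have hq: "q$1 * cnj (q$3) + q$2 * cnj (q$2) + q$3 * cnj (q$1) = 0" using assms(2) by (simp add: null_vec_def herm_def)
  have p2: "p$2 = 0" using hp assms(4) by (simp add: mult_cnj_zero)
  have p1: "p$1 \<noteq> 0" using assms(1) p2 assms(4) by (auto simp: null_vec_def vec3_eq)
  have "p$1 * cnj (q$3) = 0" using assms(3) p2 assms(4) by (simp add: herm_def)
  hence q3: "q$3 = 0" using p1 by simp
  have q2: "q$2 = 0" using hq q3 by (simp add: mult_cnj_zero)
  have q1: "q$1 \<noteq> 0" using assms(2) q2 q3 by (auto simp: null_vec_def vec3_eq)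
  show ?thesis unfolding same_point_def
    by (rule exI[of _ "q$1 / p$1"]) (use p1 q1 p2 q2 q3 assms(4) in \<open>simp add: vec3_eq\<close>)
qed

lemma herm_expand: "herm p q = p$1 * cnj (q$3) + p$2 * cnj (q$2) + p$3 * cnj (q$1)"
  by (simp add: herm_def)

lemma same_point_sym: "same_point p q \<Longrightarrow> same_point q p"
  unfolding same_point_def
  by (metis (no_types, lifting) divide_eq_0_iff nonzero_divide_eq_eq one_neq_zero vector_smult_assoc vector_smult_lid)

lemma herm_nonzero:
  fixes p q :: "complex^3"
  assumes np: "null_vec p" and nq: "null_vec q" and ns: "\<not> same_point p q"
  shows "herm p q \<noteq> 0"
proof
  assume h: "herm p q = 0"
  have h': "herm q p = 0" using h herm_cnj[of p q] by simp
  show False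
  proof (cases "p$3 = 0")
    case True thus False using herm_pair_nonzero_aux[OF np nq h] ns by simp
  next
    case p3: False
    show False
    proof (cases "q$3 = 0")
      case True thus False using herm_pair_nonzero_aux[OF nq np h'] ns same_point_sym by blast
    next
      case q3: False
      have hp: "p$1 * cnj (p$3) + p$2 * cnj (p$2) + p$3 * cnj (p$1) = 0" using np by (simp add: null_vec_def herm_def)
      have hq: "q$1 * cnj (q$3) + q$2 * cnj (q$2) + q$3 * cnj (q$1) = 0" using nq by (simp add: null_vec_def herm_def)
      define w where "w = p$2*q$3 - q$2*p$3"
      have E: "herm p q * cnj(p$3) * q$3 + herm q p * p$3 * cnj(q$3) + w * cnj w
           = q$3 * cnj (q$3) * (p$1 * cnj (p$3) + p$2 * cnj (p$2) + p$3 * cnj (p$1))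
             + p$3 * cnj (p$3) * (q$1 * cnj (q$3) + q$2 * cnj (q$2) + q$3 * cnj (q$1))"
          unfolding herm_expand w_def by (simp add: algebra_simps)
      have "w * cnj w = 0" using E[unfolded hp hq] h h' by simp
      hence "w = 0" by (simp add: mult_cnj_zero)
      define c where "c = q$3 / p$3"
      define q' where "q' = q - c *s p"
      have a3: "q'$3 = 0" using p3 by (simp add: q'_def c_def)
      have a2: "q'$2 = 0" using p3 \<open>w = 0\<close> by (simp add: q'_def c_def w_def field_simps)
      have "herm q' p = 0" using h' np by (simp add: q'_def herm_diffL herm_scaleL null_vec_def)
      hence a1: "q'$1 = 0" using a2 a3 p3 by (simp add: herm_expand)
      have "q = c *s p" using a1 a2 a3 by (simp add: q'_def vec3_eq)
      moreover have "c \<noteq> 0" using q3 p3 by (simp add: c_def)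
      ultimately show False using ns by (auto simp: same_point_def)
    qed
  qed
qed

lemma gram4_full:
  fixes p1 p2 p3 p4 :: "complex^3"
  defines "g \<equiv> herm"
  shows "g p1 p1*g p2 p2*g p3 p3*g p4 p4 - g p1 p1*g p2 p2*g p3 p4*g p4 p3 - g p1 p1*g p2 p3*g p3 p2*g p4 p4 + g p1 p1*g p2 p3*g p3 p4*g p4 p2 + g p1 p1*g p2 p4*g p3 p2*g p4 p3 - g p1 p1*g p2 p4*g p3 p3*g p4 p2
       - g p1 p2*g p2 p1*g p3 p3*g p4 p4 + g p1 p2*g p2 p1*g p3 p4*g p4 p3 + g p1 p2*g p2 p3*g p3 p1*g p4 p4 - g p1 p2*g p2 p3*g p3 p4*g p4 p1 - g p1 p2*g p2 p4*g p3 p1*g p4 p3 + g p1 p2*g p2 p4*g p3 p3*g p4 p1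
       + g p1 p3*g p2 p1*g p3 p2*g p4 p4 - g p1 p3*g p2 p1*g p3 p4*g p4 p2 - g p1 p3*g p2 p2*g p3 p1*g p4 p4 + g p1 p3*g p2 p2*g p3 p4*g p4 p1 + g p1 p3*g p2 p4*g p3 p1*g p4 p2 - g p1 p3*g p2 p4*g p3 p2*g p4 p1
       - g p1 p4*g p2 p1*g p3 p2*g p4 p3 + g p1 p4*g p2 p1*g p3 p3*g p4 p2 + g p1 p4*g p2 p2*g p3 p1*g p4 p3 - g p1 p4*g p2 p2*g p3 p3*g p4 p1 - g p1 p4*g p2 p3*g p3 p1*g p4 p2 + g p1 p4*g p2 p3*g p3 p2*g p4 p1 = 0"
  unfolding g_def herm_expand by algebra

lemma gram3_full:
  fixes u v w :: "complex^3"
  defines "g \<equiv> herm"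
  defines "d \<equiv> u$1*(v$2*w$3 - v$3*w$2) - u$2*(v$1*w$3 - v$3*w$1) + u$3*(v$1*w$2 - v$2*w$1)"
  shows "g u u * g v v * g w w - g u u * g v w * g w v - g u v * g v u * g w w + g u v * g v w * g w u
     + g u w * g v u * g w v - g u w * g v v * g w u = - d * cnj d"
  unfolding g_def herm_expand d_def by (simp add: algebra_simps)

lemma cartan:
  assumes "null_vec u" "null_vec v" "null_vec w"
  shows "Re (herm u v * herm v w * herm w u) \<le> 0"
proof -
  define d where "d = u$1*(v$2*w$3 - v$3*w$2) - u$2*(v$1*w$3 - v$3*w$1) + u$3*(v$1*w$2 - v$2*w$1)"
  have z: "herm u u = 0" "herm v v = 0" "herm w w = 0" using assms by (auto simp: null_vec_def)
  have e: "herm u v * herm v w * herm w u + herm u w * herm v u * herm w v = - d * cnj d"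
    using gram3_full[of u v w] z unfolding d_def by simp
  have c: "cnj (herm u v * herm v w * herm w u) = herm u w * herm v u * herm w v"
    by (simp add: herm_cnj)
  have "complex_of_real (2 * Re (herm u v * herm v w * herm w u)) = - complex_of_real ((cmod d)^2)"
    using e c complex_add_cnj[of "herm u v * herm v w * herm w u"] complex_norm_square[of d] by simp
  hence "2 * Re (herm u v * herm v w * herm w u) = -((cmod d)^2)"
    by (metis of_real_eq_iff of_real_minus)
  thus ?thesis by (smt (verit) zero_le_power2)
qed

lemma D_core:
  fixes g12 g13 g14 g23 g24 g34 :: complex
  assumes D: "g12*cnj g12*g34*cnj g34 - g12*g23*g34*cnj g14 - g12*g24*cnj g13*cnj g34 - g13*cnj g12*g34*cnj g24
     + g13*g24*cnj g13*cnj g24 - g13*g24*cnj g23*cnj g14 - g14*cnj g12*cnj g23*cnj g34 - g14*g23*cnj g13*cnj g24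
     + g14*g23*cnj g23*cnj g14 = 0"
  shows "(cmod g12 * cmod g34)^2 + (cmod g13 * cmod g24)^2 + (cmod g14 * cmod g23)^2
     = 2 * Re (g12*g23*g34*cnj g14) + 2 * Re (g13*cnj g23*g24*cnj g14) + 2 * Re (g12*g24*cnj g34*cnj g13)"
proof -
  have n: "\<And>z::complex. z * cnj z = of_real ((cmod z)^2)" by (metis complex_norm_square)
  let ?T1 = "g12*g23*g34*cnj g14" and ?T2 = "g13*cnj g23*g24*cnj g14" and ?T3 = "g12*g24*cnj g34*cnj g13"
  have "complex_of_real ((cmod g12 * cmod g34)^2 + (cmod g13 * cmod g24)^2 + (cmod g14 * cmod g23)^2)
      = (g12*cnj g12)*(g34*cnj g34) + (g13 * cnj g13)*(g24*cnj g24) + (g14*cnj g14)*(g23*cnj g23)"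
    unfolding n by (simp add: power_mult_distrib)
  also have "\<dots> = (?T1 + cnj ?T1) + (?T2 + cnj ?T2) + (?T3 + cnj ?T3)"
    using D by (simp add: algebra_simps)
  also have "\<dots> = complex_of_real (2 * Re ?T1 + 2 * Re ?T2 + 2 * Re ?T3)"
    by (simp only: complex_add_cnj of_real_add)
  finally show ?thesis using of_real_eq_iff by blast
qed

lemma heron_core:
  fixes A B C R1 R2 R3 :: real
  assumes pos: "A > 0" "B > 0" "C > 0"
    and le: "R1 \<le> A*C" "R2 \<le> B*C" "R3 \<le> A*B"
    and eq: "A^2 + B^2 + C^2 = 2*R1 + 2*R2 + 2*R3"
  defines "s \<equiv> sqrt (B/C)" and "t \<equiv> sqrt (A/C)"
  shows "s + t \<ge> 1" "-1 \<le> s - t" "s - t \<le> 1"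
    "(s + t = 1 \<or> s - t = -1 \<or> s - t = 1) \<longleftrightarrow> (R1 = A*C \<and> R2 = B*C \<and> R3 = A*B)"
proof -
  define a b c where "a = sqrt A" "b = sqrt B" "c = sqrt C"
  have ap: "a > 0" "b > 0" "c > 0" using pos by (auto simp: a_b_c_def)
  have sq: "A = a^2" "B = b^2" "C = c^2" using pos by (auto simp: a_b_c_def)
  have st: "s = b / c" "t = a / c" using pos by (auto simp: s_def t_def a_b_c_def real_sqrt_divide)
  define Q where "Q = 2*(A*B+B*C+C*A) - A^2 - B^2 - C^2"
  have Qf: "Q = (a+b+c)*(b+c-a)*(a+c-b)*(a+b-c)" unfolding Q_def sq by algebra
  have Q2: "Q = 2*((A*C - R1) + (B*C - R2) + (A*B - R3))" unfolding Q_def using eq by (simp add: algebra_simps)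
  have Qnn: "Q \<ge> 0" using Q2 le by simp
  have F3: "a + b - c \<ge> 0"
  proof (rule ccontr)
    assume "\<not> ?thesis"
    hence "b+c-a > 0" "a+c-b > 0" "a+b-c < 0" "a+b+c>0" using ap by auto
    hence "(a+b+c)*(b+c-a)*(a+c-b)*(a+b-c) < 0" by (simp add: mult_pos_neg)
    thus False using Qf Qnn by simp
  qed
  have F2: "a + c - b \<ge> 0"
  proof (rule ccontr)
    assume "\<not> ?thesis"
    hence "b+c-a > 0" "a+c-b < 0" "a+b-c > 0" "a+b+c>0" using ap by auto
    hence "(a+b+c)*(b+c-a)*(a+b-c)*(a+c-b) < 0" by (simp add: mult_pos_neg)
    thus False using Qf Qnn by (simp add: algebra_simps)
  qed
  have F1: "b + c - a \<ge> 0"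
  proof (rule ccontr)
    assume "\<not> ?thesis"
    hence "b+c-a < 0" "a+c-b > 0" "a+b-c > 0" "a+b+c>0" using ap by auto
    hence "(a+b+c)*(a+c-b)*(a+b-c)*(b+c-a) < 0" by (simp add: mult_pos_neg)
    thus False using Qf Qnn by (simp add: algebra_simps)
  qed
  have e1: "s + t = (a+b)/c" "s - t = (b-a)/c" using st by (auto simp: add_divide_distrib diff_divide_distrib)
  show "s + t \<ge> 1" unfolding e1 using F3 ap by (simp add: le_divide_eq)
  show "-1 \<le> s - t" unfolding e1 using F1 ap by (simp add: le_divide_eq)
  show "s - t \<le> 1" unfolding e1 using F2 ap by (simp add: divide_le_eq)
  have "(s + t = 1 \<or> s - t = -1 \<or> s - t = 1) \<longleftrightarrow> (a+b-c = 0 \<or> b+c-a = 0 \<or> a+c-b = 0)"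
  proof -
    have "s + t = 1 \<longleftrightarrow> a+b-c = 0" unfolding e1 using ap by (auto simp: divide_eq_eq)
    moreover have "s - t = -1 \<longleftrightarrow> b+c-a = 0" unfolding e1 using ap by (auto simp: divide_eq_eq)
    moreover have "s - t = 1 \<longleftrightarrow> a+c-b = 0" unfolding e1 using ap by (auto simp: divide_eq_eq)
    ultimately show ?thesis by blast
  qed
  also have "\<dots> \<longleftrightarrow> Q = 0" using Qf ap by auto
  also have "\<dots> \<longleftrightarrow> (R1 = A*C \<and> R2 = B*C \<and> R3 = A*B)" using Q2 le by auto
  finally show "(s + t = 1 \<or> s - t = -1 \<or> s - t = 1) \<longleftrightarrow> (R1 = A*C \<and> R2 = B*C \<and> R3 = A*B)" .
qed

definition cyc :: "complex^3 \<Rightarrow> complex^3 \<Rightarrow> complex^3 \<Rightarrow> complex^3 \<Rightarrow> complex" where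
  "cyc p q r s = herm p q * herm q r * herm r s * herm s p"

lemma ncnj: "(z::complex) * cnj z = of_real ((cmod z)^2)" by (metis complex_norm_square)

lemma cyc_scale:
  "cyc (a *s p) (b *s q) (c *s r) (d *s s) = of_real ((cmod a * cmod b * cmod c * cmod d)^2) * cyc p q r s"
proof -
  have "cyc (a *s p) (b *s q) (c *s r) (d *s s) = (a*cnj a)*(b*cnj b)*(c*cnj c)*(d*cnj d) * cyc p q r s"
    by (simp add: cyc_def herm_scaleL herm_scaleR algebra_simps)
  thus ?thesis unfolding ncnj by (simp add: power_mult_distrib)
qed

lemma cyc_unitary: "unitary21 A \<Longrightarrow> cyc (A *v p) (A *v q) (A *v r) (A *v s) = cyc p q r s"
  by (simp add: cyc_def unitary21_def)

lemma KR_scale: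
  assumes "a \<noteq> 0" "b \<noteq> 0" "c \<noteq> 0" "d \<noteq> 0"
  shows "KR_cross (a *s p) (b *s q) (c *s r) (d *s s) = KR_cross p q r s"
proof (cases "herm s p = 0 \<or> herm r q = 0")
  case True thus ?thesis using assms by (auto simp: KR_cross_def herm_scaleL herm_scaleR)
next
  case False thus ?thesis using assms by (simp add: KR_cross_def herm_scaleL herm_scaleR field_simps)
qed

lemma KR_unitary: "unitary21 A \<Longrightarrow> KR_cross (A *v p) (A *v q) (A *v r) (A *v s) = KR_cross p q r s"
  by (simp add: KR_cross_def unitary21_def)

lemma real_of_Re: "z \<in> \<real> \<Longrightarrow> complex_of_real (Re z) = z"
  by (simp add: of_real_Re)

lemma herm_real:
  assumes "real_vec r" "real_vec s"
  shows "herm r s = of_real (Re (r$1) * Re (s$3) + Re (r$2) * Re (s$2) + Re (r$3) * Re (s$1))"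
proof -
  have "\<And>i. r$i = of_real (Re (r$i))" "\<And>i. s$i = of_real (Re (s$i))"
    using assms by (auto simp: real_vec_def real_of_Re)
  hence "herm r s = of_real (Re (r$1)) * cnj (of_real (Re (s$3))) + of_real (Re (r$2)) * cnj (of_real (Re (s$2)))
       + of_real (Re (r$3)) * cnj (of_real (Re (s$1)))" unfolding herm_expand by metis
  thus ?thesis by simp
qed

lemma sign_core:
  fixes x1 x2 x3 y1 y2 y3 :: real
  assumes a1: "2*x1*x3 + x2^2 = 0" and a2: "2*y1*y3 + y2^2 = 0" and a3: "x3 > x1" and a4: "y3 > y1"
  shows "x1*y3 + x2*y2 + x3*y1 \<le> 0"
proof -
  have "x1*x3 \<le> 0" using a1 zero_le_power2[of x2] by linarith
  hence x: "x1 \<le> 0" "x3 \<ge> 0" using a3 mult_pos_pos[of x1 x3] mult_neg_neg[of x1 x3] by linarith+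
  have "y1*y3 \<le> 0" using a2 zero_le_power2[of y2] by linarith
  hence y: "y1 \<le> 0" "y3 \<ge> 0" using a4 mult_pos_pos[of y1 y3] mult_neg_neg[of y1 y3] by linarith+
  define P where "P = - x1*y3"
  define Q where "Q = - x3*y1"
  have PQ: "P \<ge> 0" "Q \<ge> 0" using x y by (auto simp: P_def Q_def mult_nonneg_nonneg mult_nonpos_nonneg
     mult_nonneg_nonpos)
  have "x2^2 = -2*x1*x3" "y2^2 = -2*y1*y3" using a1 a2 by linarith+
  hence "(x2*y2)^2 = 4*P*Q" by (simp add: power_mult_distrib P_def Q_def algebra_simps)
  also have "\<dots> \<le> (P+Q)^2" using zero_le_power2[of "P-Q"] by (simp add: power2_eq_square algebra_simps)
  finally have "\<bar>x2*y2\<bar> \<le> P+Q" using PQ power2_le_imp_le[of "\<bar>x2*y2\<bar>" "P+Q"] by simp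
  thus ?thesis by (simp add: P_def Q_def) 
qed

lemma sign_gen:
  fixes x1 x2 x3 y1 y2 y3 :: real
  assumes a1: "2*x1*x3 + x2^2 = 0" and a2: "2*y1*y3 + y2^2 = 0"
  shows "(x1*y3 + x2*y2 + x3*y1) * (x3 - x1) * (y3 - y1) \<le> 0"
proof -
  let ?h = "x1*y3 + x2*y2 + x3*y1"
  have n1: "2*(-x1)*(-x3) + (-x2)^2 = 0" using a1 by simp
  have n2: "2*(-y1)*(-y3) + (-y2)^2 = 0" using a2 by simp
  consider "x3 - x1 = 0" | "y3 - y1 = 0" | "x3 > x1" "y3 > y1" | "x3 > x1" "y3 < y1" | "x3 < x1" "y3 > y1"
     | "x3 < x1" "y3 < y1" by linarith
  thus ?thesis
  proof cases
    case 3
    have "?h \<le> 0" using sign_core[OF a1 a2 3] .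
    moreover have "(x3 - x1) * (y3 - y1) > 0" using 3 by simp
    ultimately have "?h * ((x3 - x1) * (y3 - y1)) \<le> 0" by (simp add: mult_nonpos_nonneg)
    thus ?thesis by (simp add: mult.assoc)
  next
    case 4
    have "x1*(-y3) + x2*(-y2) + x3*(-y1) \<le> 0" using sign_core[OF a1 n2] 4 by simp
    hence "?h \<ge> 0" by simp
    moreover have "(x3 - x1) * (y3 - y1) < 0" using 4 by (simp add: mult_pos_neg)
    ultimately have "?h * ((x3 - x1) * (y3 - y1)) \<le> 0" by (simp add: mult_nonneg_nonpos)
    thus ?thesis by (simp add: mult.assoc)
  next
    case 5
    have "(-x1)*y3 + (-x2)*y2 + (-x3)*y1 \<le> 0" using sign_core[OF n1 a2] 5 by simp
    hence "?h \<ge> 0" by simp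
    moreover have "(x3 - x1) * (y3 - y1) < 0" using 5 by (simp add: mult_neg_pos)
    ultimately have "?h * ((x3 - x1) * (y3 - y1)) \<le> 0" by (simp add: mult_nonneg_nonpos)
    thus ?thesis by (simp add: mult.assoc)
  next
    case 6
    have "(-x1)*(-y3) + (-x2)*(-y2) + (-x3)*(-y1) \<le> 0" using sign_core[OF n1 n2] 6 by simp
    hence "?h \<le> 0" by simp
    moreover have "(x3 - x1) * (y3 - y1) > 0" using 6 by (simp add: mult_neg_neg)
    ultimately have "?h * ((x3 - x1) * (y3 - y1)) \<le> 0" by (simp add: mult_nonpos_nonneg)
    thus ?thesis by (simp add: mult.assoc)
  qed simp_all
qed

definition sgm :: "complex^3 \<Rightarrow> real" where "sgm r = Re (r$3) - Re (r$1)"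

lemma null_real:
  assumes "real_vec r" "null_vec r"
  shows "2 * Re (r$1) * Re (r$3) + (Re (r$2))^2 = 0"
proof -
  have "herm r r = 0" using assms by (simp add: null_vec_def)
  hence "complex_of_real (Re (r$1) * Re (r$3) + Re (r$2) * Re (r$2) + Re (r$3) * Re (r$1)) = 0"
    using herm_real[OF assms(1) assms(1)] by simp
  hence "Re (r$1) * Re (r$3) + Re (r$2) * Re (r$2) + Re (r$3) * Re (r$1) = 0" by (simp only: of_real_eq_0_iff)
  thus ?thesis by (simp add: power2_eq_square algebra_simps)
qed

lemma sign_vec:
  assumes "real_vec x" "null_vec x" "real_vec y" "null_vec y"
  shows "Re (herm x y) * sgm x * sgm y \<le> 0"
  using sign_gen[OF null_real[OF assms(1,2)] null_real[OF assms(3,4)]] herm_real[OF assms(1,3)]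
  by (simp add: sgm_def)

lemma sgm_nz:
  assumes "real_vec x" "null_vec x"
  shows "sgm x \<noteq> 0"
proof
  assume s: "sgm x = 0"
  have e: "2 * Re (x$1) * Re (x$3) + (Re (x$2))^2 = 0" using null_real[OF assms] .
  have "Re (x$3) = Re (x$1)" using s by (simp add: sgm_def)
  hence "2 * (Re (x$1))^2 + (Re (x$2))^2 = 0" using e by (simp add: power2_eq_square)
  hence z: "Re (x$1) = 0" "Re (x$2) = 0" using zero_le_power2[of "Re (x$1)"] zero_le_power2[of "Re (x$2)"]
    by (smt (verit) power_eq_0_iff)+
  have "\<And>i. x$i = of_real (Re (x$i))" using assms(1) by (auto simp: real_vec_def real_of_Re)
  hence "x = 0" using z \<open>Re (x$3) = Re (x$1)\<close> by (metis vec3_eq zero_index of_real_0)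
  thus False using assms(2) by (simp add: null_vec_def)
qed

lemma cycle_pos:
  fixes h12 h23 h34 h41 s1 s2 s3 s4 :: real
  assumes "h12 * s1 * s2 \<le> 0" "h23 * s2 * s3 \<le> 0" "h34 * s3 * s4 \<le> 0" "h41 * s4 * s1 \<le> 0"
    and "h12 \<noteq> 0" "h23 \<noteq> 0" "h34 \<noteq> 0" "h41 \<noteq> 0" "s1 \<noteq> 0" "s2 \<noteq> 0" "s3 \<noteq> 0" "s4 \<noteq> 0"
  shows "h12 * h23 * h34 * h41 > 0"
proof -
  have n: "h12 * s1 * s2 < 0" "h23 * s2 * s3 < 0" "h34 * s3 * s4 < 0" "h41 * s4 * s1 < 0"
    using assms by (auto simp: order.order_iff_strict)
  have "(h12 * s1 * s2) * (h23 * s2 * s3) > 0" "(h34 * s3 * s4) * (h41 * s4 * s1) > 0"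
    using n by (auto intro: mult_neg_neg)
  hence "((h12 * s1 * s2) * (h23 * s2 * s3)) * ((h34 * s3 * s4) * (h41 * s4 * s1)) > 0" by simp
  hence "(h12 * h23 * h34 * h41) * (s1 * s2 * s3 * s4)^2 > 0" by (simp add: power2_eq_square algebra_simps)
  moreover have "(s1 * s2 * s3 * s4)^2 > 0" using assms by simp
  ultimately show ?thesis by (simp add: zero_less_mult_iff)
qed

lemma herm_real_sym: "real_vec r \<Longrightarrow> real_vec s \<Longrightarrow> Re (herm r s) = Re (herm s r)"
  by (metis Re_complex_of_real herm_cnj herm_real complex_cnj_complex_of_real)

lemma herm_real_eq: "real_vec r \<Longrightarrow> real_vec s \<Longrightarrow> herm r s = of_real (Re (herm r s))"
  using herm_real by (metis Re_complex_of_real)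

lemma cyc_real_pos:
  assumes r: "real_vec a" "real_vec b" "real_vec c" "real_vec d"
    and n: "null_vec a" "null_vec b" "null_vec c" "null_vec d"
    and nz: "herm a b \<noteq> 0" "herm b c \<noteq> 0" "herm c d \<noteq> 0" "herm d a \<noteq> 0"
  shows "Re (herm a b) * Re (herm b c) * Re (herm c d) * Re (herm d a) > 0"
proof (rule cycle_pos)
  show "Re (herm a b) * sgm a * sgm b \<le> 0" using sign_vec r n by blast
  show "Re (herm b c) * sgm b * sgm c \<le> 0" using sign_vec r n by blast
  show "Re (herm c d) * sgm c * sgm d \<le> 0" using sign_vec r n by blast
  show "Re (herm d a) * sgm d * sgm a \<le> 0" using sign_vec r n by blast
  show "sgm a \<noteq> 0" "sgm b \<noteq> 0" "sgm c \<noteq> 0" "sgm d \<noteq> 0" using sgm_nz r n by blast+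
  show "Re (herm a b) \<noteq> 0" using nz(1) herm_real_eq[OF r(1,2)] by (metis of_real_0)
  show "Re (herm b c) \<noteq> 0" using nz(2) herm_real_eq[OF r(2,3)] by (metis of_real_0)
  show "Re (herm c d) \<noteq> 0" using nz(3) herm_real_eq[OF r(3,4)] by (metis of_real_0)
  show "Re (herm d a) \<noteq> 0" using nz(4) herm_real_eq[OF r(4,1)] by (metis of_real_0)
qed

lemma herm_lift: "unitary21 A \<Longrightarrow> herm (a *s (A *v r)) (b *s (A *v s)) = a * cnj b * herm r s"
  by (simp add: herm_scaleL herm_scaleR unitary21_def)

lemma cyc_lift_pos:
  assumes U: "unitary21 A"
    and r: "real_vec a" "real_vec b" "real_vec c" "real_vec d"
    and n: "null_vec a" "null_vec b" "null_vec c" "null_vec d"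
    and cz: "ca \<noteq> 0" "cb \<noteq> 0" "cc \<noteq> 0" "cd \<noteq> 0"
    and nz: "herm a b \<noteq> 0" "herm b c \<noteq> 0" "herm c d \<noteq> 0" "herm d a \<noteq> 0"
  shows "Re (cyc (ca *s (A *v a)) (cb *s (A *v b)) (cc *s (A *v c)) (cd *s (A *v d)))
       = cmod (cyc (ca *s (A *v a)) (cb *s (A *v b)) (cc *s (A *v c)) (cd *s (A *v d)))"
proof -
  define K where "K = (cmod ca * cmod cb * cmod cc * cmod cd)^2"
  define H where "H = Re (herm a b) * Re (herm b c) * Re (herm c d) * Re (herm d a)"
  have K: "K > 0" using cz by (simp add: K_def)
  have H: "H > 0" unfolding H_def using cyc_real_pos[OF r n nz] .
  have q: "herm a b = of_real (Re (herm a b))" "herm b c = of_real (Re (herm b c))"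
    "herm c d = of_real (Re (herm c d))" "herm d a = of_real (Re (herm d a))"
    using herm_real_eq r by blast+
  have "cyc a b c d = of_real H"
    unfolding cyc_def H_def by (subst q(1), subst q(2), subst q(3), subst q(4)) simp
  hence e: "cyc (ca *s (A *v a)) (cb *s (A *v b)) (cc *s (A *v c)) (cd *s (A *v d)) = of_real (K * H)"
    by (simp add: cyc_scale cyc_unitary[OF U] K_def)
  show ?thesis unfolding e Re_complex_of_real norm_of_real using K H by simp
qed

lemma KR_real_pos:
  assumes r: "real_vec a" "real_vec b" "real_vec c" "real_vec d"
    and n: "null_vec a" "null_vec b" "null_vec c" "null_vec d"
    and nz: "herm a c \<noteq> 0" "herm c b \<noteq> 0" "herm b d \<noteq> 0" "herm d a \<noteq> 0"
  shows "KR_cross a b c d \<in> \<real> \<and> Re (KR_cross a b c d) > 0"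
proof -
  have P: "Re (herm a c) * Re (herm c b) * Re (herm b d) * Re (herm d a) > 0"
    using cyc_real_pos[OF r(1,3,2,4) n(1,3,2,4) nz] .
  define q where "q = (Re (herm c a) * Re (herm d b)) / (Re (herm d a) * Re (herm c b))"
  have qq: "herm c a = of_real (Re (herm c a))" "herm d b = of_real (Re (herm d b))"
    "herm d a = of_real (Re (herm d a))" "herm c b = of_real (Re (herm c b))"
    using herm_real_eq r by blast+
  have e: "KR_cross a b c d = of_real q"
    unfolding KR_cross_def q_def by (subst qq(1), subst qq(2), subst qq(3), subst qq(4)) simp
  have "(Re (herm c a) * Re (herm d b)) * (Re (herm d a) * Re (herm c b)) > 0"
    using P herm_real_sym r by (simp add: algebra_simps)
  hence "q > 0" unfolding q_def by (metis divide_pos_pos divide_neg_neg zero_less_mult_iff)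
  thus ?thesis using e by simp
qed

lemma KR_lift:
  assumes "unitary21 A" "ca \<noteq> 0" "cb \<noteq> 0" "cc \<noteq> 0" "cd \<noteq> 0"
  shows "KR_cross (ca *s (A *v a)) (cb *s (A *v b)) (cc *s (A *v c)) (cd *s (A *v d)) = KR_cross a b c d"
  using KR_scale[OF assms(2-5)] KR_unitary[OF assms(1)] by simp

lemma concyc_unpack:
  assumes "concyclic_R p1 p2 p3 p4"
  shows "\<exists>A r1 r2 r3 r4 c1 c2 c3 c4. unitary21 A \<and>
     real_vec r1 \<and> real_vec r2 \<and> real_vec r3 \<and> real_vec r4 \<and>
     null_vec r1 \<and> null_vec r2 \<and> null_vec r3 \<and> null_vec r4 \<and>
     c1 \<noteq> 0 \<and> c2 \<noteq> 0 \<and> c3 \<noteq> 0 \<and> c4 \<noteq> 0 \<and>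
     p1 = c1 *s (A *v r1) \<and> p2 = c2 *s (A *v r2) \<and> p3 = c3 *s (A *v r3) \<and> p4 = c4 *s (A *v r4)"
proof -
  obtain A where A: "on_R_circle A p1" "on_R_circle A p2" "on_R_circle A p3" "on_R_circle A p4"
    using assms unfolding concyclic_R_def by blast
  obtain r1 c1 where 1: "real_vec r1" "null_vec r1" "c1 \<noteq> 0" "p1 = c1 *s (A *v r1)"
    using A(1) unfolding on_R_circle_def same_point_def by blast
  obtain r2 c2 where 2: "real_vec r2" "null_vec r2" "c2 \<noteq> 0" "p2 = c2 *s (A *v r2)"
    using A(2) unfolding on_R_circle_def same_point_def by blast
  obtain r3 c3 where 3: "real_vec r3" "null_vec r3" "c3 \<noteq> 0" "p3 = c3 *s (A *v r3)"
    using A(3) unfolding on_R_circle_def same_point_def by blast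
  obtain r4 c4 where 4: "real_vec r4" "null_vec r4" "c4 \<noteq> 0" "p4 = c4 *s (A *v r4)"
    using A(4) unfolding on_R_circle_def same_point_def by blast
  have U: "unitary21 A" using A(1) by (simp add: on_R_circle_def)
  show ?thesis
    apply (rule exI[of _ A], rule exI[of _ r1], rule exI[of _ r2], rule exI[of _ r3], rule exI[of _ r4])
    apply (rule exI[of _ c1], rule exI[of _ c2], rule exI[of _ c3], rule exI[of _ c4])
    using U 1 2 3 4 by simp
qed

lemma surj_test: "linear f \<Longrightarrow> inj f \<Longrightarrow> surj (f::complex^3 \<Rightarrow> complex^3)"
  by (simp add: linear_injective_imp_surjective)

definition e1 :: "complex^3" where "e1 = (\<chi> i. if i = 1 then 1 else 0)"
definition e2 :: "complex^3" where "e2 = (\<chi> i. if i = 2 then 1 else 0)"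
definition e3 :: "complex^3" where "e3 = (\<chi> i. if i = 3 then 1 else 0)"

lemma e_comp[simp]: "e1$1 = 1" "e1$2 = 0" "e1$3 = 0" "e2$1 = 0" "e2$2 = 1" "e2$3 = 0" "e3$1 = 0" "e3$2 = 0" "e3$3 = 1"
  by (simp_all add: e1_def e2_def e3_def)

lemma herm_e: "herm u e1 = u$3" "herm u e2 = u$2" "herm u e3 = u$1"
  by (simp_all add: herm_expand)

definition mk3 :: "complex^3 \<Rightarrow> complex^3 \<Rightarrow> complex^3 \<Rightarrow> complex^3^3" where
  "mk3 C1 C2 C3 = (\<chi> i j. if j = 1 then C1$i else if j = 2 then C2$i else C3$i)"

lemma mk3_mv: "mk3 C1 C2 C3 *v z = z$1 *s C1 + z$2 *s C2 + z$3 *s C3"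
  by (simp add: vec3_eq matrix_vector_mult_def sum_3 mk3_def algebra_simps)

lemma unitary_mk3:
  assumes "herm C1 C1 = 0" "herm C1 C2 = 0" "herm C1 C3 = 1"
          "herm C2 C2 = 1" "herm C2 C3 = 0" "herm C3 C3 = 0"
  shows "unitary21 (mk3 C1 C2 C3)"
proof -
  have c: "herm C2 C1 = 0" "herm C3 C1 = 1" "herm C3 C2 = 0"
    using assms herm_cnj by (metis complex_cnj_zero complex_cnj_one)+
  show ?thesis unfolding unitary21_def
  proof (intro allI)
    fix z w :: "complex^3"
    have "herm (mk3 C1 C2 C3 *v z) (mk3 C1 C2 C3 *v w) = z$1 * cnj (w$3) + z$2 * cnj (w$2) + z$3 * cnj (w$1)"
      unfolding mk3_mv by (simp add: herm_addL herm_addR herm_scaleL herm_scaleR assms c)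
    thus "herm (mk3 C1 C2 C3 *v z) (mk3 C1 C2 C3 *v w) = herm z w" by (simp add: herm_expand)
  qed
qed

lemma unitary_inj:
  assumes "unitary21 A" "A *v u = 0"
  shows "u = 0"
proof -
  have "\<And>w. herm u w = 0" using assms by (metis herm_zeroL unitary21_def)
  from this[of e1] this[of e2] this[of e3] show ?thesis by (simp add: herm_e vec3_eq)
qed

lemma unitary_surj:
  assumes "unitary21 A" shows "\<exists>u. A *v u = q"
proof -
  have l: "linear ((*v) A)" by simp
  have "inj ((*v) A)" using linear_injective_0[OF l] unitary_inj[OF assms] by blast
  hence "surj ((*v) A)" using linear_injective_imp_surjective[OF l] by blast
  thus ?thesis by (metis surjD)
qed

lemma real_vec3: "real_vec r \<longleftrightarrow> r$1 \<in> \<real> \<and> r$2 \<in> \<real> \<and> r$3 \<in> \<real>"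
  by (simp add: real_vec_def forall_3)

lemma construct:
  fixes q1 q2 q3 q4 :: "complex^3" and x y z :: real
  assumes n: "null_vec q1" "null_vec q2" "null_vec q3" "null_vec q4"
    and h1: "herm q2 q1 = 1" "herm q3 q1 = 1" "herm q4 q1 = 1"
    and hx: "herm q2 q3 = of_real x" and xneg: "x < 0"
    and hy: "herm q4 q2 = of_real y" and hz: "herm q4 q3 = of_real z"
  shows "\<exists>A. unitary21 A \<and> (\<exists>r. real_vec r \<and> null_vec r \<and> A *v r = q1)
     \<and> (\<exists>r. real_vec r \<and> null_vec r \<and> A *v r = q2)
     \<and> (\<exists>r. real_vec r \<and> null_vec r \<and> A *v r = q3)
     \<and> (\<exists>r. real_vec r \<and> null_vec r \<and> A *v r = q4)"
proof -
  have z0: "herm q1 q1 = 0" "herm q2 q2 = 0" "herm q3 q3 = 0" "herm q4 q4 = 0"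
    using n by (auto simp: null_vec_def)
  have h1': "herm q1 q2 = 1" "herm q1 q3 = 1" "herm q1 q4 = 1"
    using h1 herm_cnj by (metis complex_cnj_one)+
  have hx': "herm q3 q2 = of_real x" using hx herm_cnj by (metis complex_cnj_complex_of_real)
  define v where "v = sqrt (-2*x)"
  have vpos: "v > 0" using xneg by (simp add: v_def)
  have vsq: "v * v = -2*x" using xneg by (simp add: v_def)
  define Y where "Y = q3 - of_real x *s q1 - q2"
  define C2 where "C2 = (1 / of_real v) *s Y"
  define A where "A = mk3 q1 C2 q2"
  have g1: "herm q1 C2 = 0"
    by (simp add: C2_def Y_def herm_scaleR herm_diffR z0 h1')
  have g2: "herm C2 q2 = 0"
    by (simp add: C2_def Y_def herm_scaleL herm_diffL z0 h1' hx')
  have YY: "herm Y Y = of_real (-2*x)"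
    by (simp add: Y_def herm_diffL herm_diffR herm_scaleL herm_scaleR z0 h1 h1' hx hx')
  have g3: "herm C2 C2 = 1"
  proof -
    have "herm C2 C2 = (1 / of_real v) * cnj (1 / of_real v) * herm Y Y"
      by (simp add: C2_def herm_scaleL herm_scaleR)
    also have "\<dots> = of_real ((-2*x) / (v * v))" unfolding YY by simp
    also have "\<dots> = 1" using vsq vpos xneg by simp
    finally show ?thesis .
  qed
  have U: "unitary21 A" unfolding A_def
    by (rule unitary_mk3) (simp_all add: z0 g1 g2 g3 h1')
  have Ae1: "A *v e1 = q1" by (simp add: A_def mk3_mv)
  have Ae2: "A *v e2 = C2" by (simp add: A_def mk3_mv)
  have Ae3: "A *v e3 = q2" by (simp add: A_def mk3_mv)
  define r3 :: "complex^3" where "r3 = (\<chi> i. if i = 1 then of_real x else if i = 2 then of_real v else 1)"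
  have r3c: "r3$1 = of_real x" "r3$2 = of_real v" "r3$3 = 1" by (simp_all add: r3_def)
  have Ar3: "A *v r3 = q3"
  proof -
    have "A *v r3 = of_real x *s q1 + of_real v *s C2 + q2" by (simp add: A_def mk3_mv r3c)
    also have "\<dots> = q3" using vpos by (simp add: C2_def Y_def vector_smult_assoc)
    finally show ?thesis .
  qed
  have r3n: "null_vec r3"
  proof -
    have "herm r3 r3 = of_real (x + v * v + x)" by (simp add: herm_expand r3c)
    also have "\<dots> = 0" using vsq by simp
    finally show ?thesis unfolding null_vec_def using r3c by (auto simp: vec3_eq)
  qed
  have r3r: "real_vec r3" by (simp add: real_vec3 r3c)
  obtain u where Au: "A *v u = q4" using unitary_surj[OF U] by blast
  have herm_u: "\<And>w. herm u w = herm q4 (A *v w)" using U Au unfolding unitary21_def by metis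
  have u3: "u$3 = 1" using herm_u[of e1] by (simp add: herm_e Ae1 h1)
  have u1: "u$1 = of_real y" using herm_u[of e3] by (simp add: herm_e Ae3 hy)
  have u2: "u$2 = of_real ((z - x - y) / v)"
  proof -
    have "u$2 = herm q4 C2" using herm_u[of e2] by (simp add: herm_e Ae2)
    also have "\<dots> = of_real ((z - x - y) / v)"
      by (simp add: C2_def Y_def herm_scaleR herm_diffR hz hy h1 diff_divide_distrib)
    finally show ?thesis .
  qed
  have ur: "real_vec u" by (simp add: real_vec3 u1 u2 u3)
  have un: "null_vec u"
  proof -
    have "herm u u = 0" using herm_u[of u] Au z0 by simp
    moreover have "u \<noteq> 0" using Au n(4) by (auto simp: null_vec_def)
    ultimately show ?thesis by (simp add: null_vec_def)
  qed
  have e1r: "real_vec e1" "null_vec e1" by (auto simp: real_vec3 null_vec_def herm_e vec3_eq)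
  have e3r: "real_vec e3" "null_vec e3" by (auto simp: real_vec3 null_vec_def herm_e vec3_eq)
  show ?thesis
    using U e1r Ae1 e3r Ae3 r3r r3n Ar3 ur un Au by blast
qed

lemma im_zero:
  fixes X W :: complex
  assumes "X * W = of_real e" "cnj X * W = of_real b" "e > 0" "b > 0"
  shows "Im X = 0"
proof -
  have "X * of_real b = cnj X * of_real e"
    using assms(1,2) by (metis mult.assoc mult.commute)
  hence "Im (X * of_real b) = Im (cnj X * of_real e)" by simp
  hence "b * Im X = - e * Im X" by (simp add: mult.commute)
  hence "(b + e) * Im X = 0" by (simp add: algebra_simps)
  thus ?thesis using assms(3,4) by simp
qed

lemma Re_cmod_pos:
  assumes "Re z = cmod z" "z \<noteq> 0"
  shows "z = of_real (cmod z)" "cmod z > 0"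
proof -
  have "(Re z)^2 = (Re z)^2 + (Im z)^2" using assms(1) cmod_power2[of z] by simp
  hence "Im z = 0" by simp
  thus "z = of_real (cmod z)" using assms(1) by (simp add: complex_eq_iff)
  show "cmod z > 0" using assms(2) by simp
qed

lemma on_circ:
  assumes "unitary21 A" "real_vec r" "null_vec r" "A *v r = k *s p" "k \<noteq> 0"
  shows "on_R_circle A p"
proof -
  have "p = (1/k) *s (A *v r)" using assms(4,5) by (simp add: vector_smult_assoc)
  thus ?thesis using assms unfolding on_R_circle_def same_point_def
    by (metis divide_eq_0_iff one_neq_zero)
qed

lemma null_scale: "null_vec p \<Longrightarrow> k \<noteq> 0 \<Longrightarrow> null_vec (k *s p)"
  by (simp add: null_vec_def herm_scaleL herm_scaleR vec_eq_iff)

lemma conc_of_T: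
  fixes p1 p2 p3 p4 :: "complex^3"
  assumes n: "null_vec p1" "null_vec p2" "null_vec p3" "null_vec p4"
    and nz: "herm p1 p2 \<noteq> 0" "herm p1 p3 \<noteq> 0" "herm p1 p4 \<noteq> 0"
            "herm p2 p3 \<noteq> 0" "herm p2 p4 \<noteq> 0" "herm p3 p4 \<noteq> 0"
    and T: "Re (cyc p1 p2 p3 p4) = cmod (cyc p1 p2 p3 p4)"
           "Re (cyc p1 p3 p2 p4) = cmod (cyc p1 p3 p2 p4)"
           "Re (cyc p1 p2 p4 p3) = cmod (cyc p1 p2 p4 p3)"
  shows "concyclic_R p1 p2 p3 p4"
proof -
  have nz': "herm p2 p1 \<noteq> 0" "herm p3 p1 \<noteq> 0" "herm p4 p1 \<noteq> 0"
            "herm p3 p2 \<noteq> 0" "herm p4 p2 \<noteq> 0" "herm p4 p3 \<noteq> 0"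
    using nz herm_cnj by (metis complex_cnj_zero_iff)+
  define k2 where "k2 = 1 / herm p2 p1"
  define k3 where "k3 = 1 / herm p3 p1"
  define k4 where "k4 = 1 / herm p4 p1"
  have kz: "k2 \<noteq> 0" "k3 \<noteq> 0" "k4 \<noteq> 0" using nz' by (auto simp: k2_def k3_def k4_def)
  define q1 where "q1 = p1"
  define q2 where "q2 = k2 *s p2"
  define q3 where "q3 = k3 *s p3"
  define q4 where "q4 = k4 *s p4"
  have qn: "null_vec q1" "null_vec q2" "null_vec q3" "null_vec q4"
    using n kz null_scale by (auto simp: q1_def q2_def q3_def q4_def)
  have h1: "herm q2 q1 = 1" "herm q3 q1 = 1" "herm q4 q1 = 1"
    using nz' by (simp_all add: q1_def q2_def q3_def q4_def k2_def k3_def k4_def herm_scaleL)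
  have h1': "herm q1 q2 = 1" "herm q1 q3 = 1" "herm q1 q4 = 1"
    using h1 herm_cnj by (metis complex_cnj_one)+
  have q1s: "q1 = 1 *s p1" by (simp add: q1_def)
  have cnz: "cyc p1 p2 p3 p4 \<noteq> 0" "cyc p1 p3 p2 p4 \<noteq> 0" "cyc p1 p2 p4 p3 \<noteq> 0"
    using nz nz' by (auto simp: cyc_def)
  define K where "K = (cmod 1 * cmod k2 * cmod k3 * cmod k4)^2"
  have Kp: "K > 0" using kz by (simp add: K_def)
  have K2: "(cmod 1 * cmod k3 * cmod k2 * cmod k4)^2 = K" "(cmod 1 * cmod k2 * cmod k4 * cmod k3)^2 = K"
    by (simp_all add: K_def algebra_simps)
  define a where "a = K * cmod (cyc p1 p2 p3 p4)"
  define b where "b = K * cmod (cyc p1 p3 p2 p4)"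
  define c where "c = K * cmod (cyc p1 p2 p4 p3)"
  have abc: "a > 0" "b > 0" "c > 0" using Kp cnz by (simp_all add: a_def b_def c_def)
  have ca: "cyc q1 q2 q3 q4 = of_real a"
    unfolding q1s q2_def q3_def q4_def cyc_scale a_def K_def[symmetric]
    using Re_cmod_pos(1)[OF T(1) cnz(1)] by (metis of_real_mult)
  have cb: "cyc q1 q3 q2 q4 = of_real b"
    unfolding q1s q2_def q3_def q4_def cyc_scale b_def K2
    using Re_cmod_pos(1)[OF T(2) cnz(2)] by (metis of_real_mult)
  have cc: "cyc q1 q2 q4 q3 = of_real c"
    unfolding q1s q2_def q3_def q4_def cyc_scale c_def K2
    using Re_cmod_pos(1)[OF T(3) cnz(3)] by (metis of_real_mult)
  define X where "X = herm q2 q3"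
  define Y where "Y = herm q4 q2"
  define Z where "Z = herm q4 q3"
  have e1: "X * cnj Z = of_real a" using ca h1 h1' by (simp add: cyc_def X_def Z_def herm_cnj)
  have e2: "cnj X * cnj Y = of_real b" using cb h1 h1' by (simp add: cyc_def X_def Y_def herm_cnj)
  have e3: "cnj Y * Z = of_real c" using cc h1 h1' by (simp add: cyc_def Y_def Z_def herm_cnj)
  have Znz: "Z \<noteq> 0" using e3 abc by auto
  have "(X * cnj Z) * (cnj Y * Z) = (X * cnj Y) * (Z * cnj Z)" by (simp add: algebra_simps)
  hence "X * cnj Y * of_real ((cmod Z)^2) = of_real (a * c)" using e1 e3 by (simp add: ncnj)
  hence e4: "X * cnj Y = of_real (a * c / (cmod Z)^2)" using Znz
    by (simp add: field_simps)
  have imX: "Im X = 0" using im_zero[OF e4 e2] abc Znz by simp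
  hence Xr: "X = of_real (Re X)" by (simp add: complex_eq_iff)
  have Xnz: "X \<noteq> 0" using e1 abc by auto
  have "Re (herm q1 q2 * herm q2 q3 * herm q3 q1) \<le> 0" using cartan qn by blast
  hence "Re X \<le> 0" using h1 h1' by (simp add: X_def)
  hence xneg: "Re X < 0" using Xnz Xr by (metis of_real_0 order.order_iff_strict)
  have Yr: "Y = of_real (Re Y)"
  proof -
    have "cnj Y = of_real (b / Re X)" using e2 Xr Xnz
      by (metis complex_cnj_complex_of_real nonzero_mult_div_cancel_left of_real_divide of_real_eq_0_iff)
    thus ?thesis by (metis complex_cnj_cnj complex_cnj_complex_of_real Re_complex_of_real)
  qed
  have Zr: "Z = of_real (Re Z)"
  proof -
    have "cnj Z = of_real (a / Re X)" using e1 Xr Xnz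
      by (metis nonzero_mult_div_cancel_left of_real_divide of_real_eq_0_iff)
    thus ?thesis by (metis complex_cnj_cnj complex_cnj_complex_of_real Re_complex_of_real)
  qed
  obtain A where A: "unitary21 A"
     "\<exists>r. real_vec r \<and> null_vec r \<and> A *v r = q1"
     "\<exists>r. real_vec r \<and> null_vec r \<and> A *v r = q2"
     "\<exists>r. real_vec r \<and> null_vec r \<and> A *v r = q3"
     "\<exists>r. real_vec r \<and> null_vec r \<and> A *v r = q4"
    using construct[OF qn h1, of "Re X" "Re Y" "Re Z"] Xr Yr Zr xneg
    unfolding X_def Y_def Z_def by metis
  have "on_R_circle A p1" using A(1,2) on_circ[of A _ 1 p1] by (auto simp: q1_def)
  moreover have "on_R_circle A p2" using A(1,3) on_circ[of A _ k2 p2] kz by (auto simp: q2_def)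
  moreover have "on_R_circle A p3" using A(1,4) on_circ[of A _ k3 p3] kz by (auto simp: q3_def)
  moreover have "on_R_circle A p4" using A(1,5) on_circ[of A _ k4 p4] kz by (auto simp: q4_def)
  ultimately show ?thesis unfolding concyclic_R_def by blast
qed

lemma between_iff:
  fixes a b c :: real
  assumes "c \<noteq> a" "c \<noteq> b"
  shows "(min a b < c \<and> c < max a b) \<longleftrightarrow> (c - a) * (c - b) < 0"
  using assms by (cases "a \<le> b") (auto simp: min_def max_def mult_less_0_iff)

lemma sep_iff:
  fixes a b c d :: real
  assumes "c \<noteq> a" "c \<noteq> b" "d \<noteq> a" "d \<noteq> b"
  shows "separates a b c d \<longleftrightarrow> ((c - a) * (c - b)) * ((d - a) * (d - b)) < 0"
proof -
  have g: "\<And>x y::real. x \<noteq> 0 \<Longrightarrow> y \<noteq> 0 \<Longrightarrow> ((x < 0) \<noteq> (y < 0)) \<longleftrightarrow> x * y < 0"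
    by (auto simp: mult_less_0_iff)
  have x: "(c - a) * (c - b) \<noteq> 0" "(d - a) * (d - b) \<noteq> 0" using assms by auto
  show ?thesis
    unfolding separates_def between_iff[OF assms(1,2)] between_iff[OF assms(3,4)]
    using g[OF x] .
qed

lemma sin_half_sign:
  fixes a b :: real
  assumes "0 \<le> a" "a < 2 * pi" "0 \<le> b" "b < 2 * pi" "a \<noteq> b"
  shows "sin ((a - b)/2) * (a - b) > 0"
proof (cases "a > b")
  case True
  hence "sin ((a - b)/2) > 0" using assms by (intro sin_gt_zero) auto
  thus ?thesis using True by simp
next
  case False
  hence "b > a" using assms by simp
  hence "sin ((b - a)/2) > 0" using assms by (intro sin_gt_zero) auto
  hence "sin ((a - b)/2) < 0" by (metis minus_diff_eq sin_minus neg_less_0_iff_less minus_divide_left)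
  thus ?thesis using \<open>b > a\<close> by (simp add: mult_neg_neg)
qed

lemma pos_factor: "(S::real) * d > 0 \<Longrightarrow> \<exists>P>0. S = P * d"
  by (rule exI[of _ "S / d"]) (auto simp: zero_less_mult_iff zero_less_divide_iff)

lemma ptolemy:
  fixes a b c d :: real
  shows "sin (a - c) * sin (b - d) = sin (a - b) * sin (c - d) + sin (a - d) * sin (b - c)"
  by (simp add: sin_diff algebra_simps)

lemma cos_m1: "cos (x::real) - 1 = -2 * (sin (x/2))^2"
  using cos_double_sin[of "x/2"] by simp

lemma fin1: "(w::real) \<noteq> 0 \<Longrightarrow> u = v + w \<Longrightarrow> v * w > 0 \<Longrightarrow> \<bar>u\<bar>/\<bar>w\<bar> - \<bar>v\<bar>/\<bar>w\<bar> = 1"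
  by (auto simp: zero_less_mult_iff diff_divide_distrib[symmetric] abs_if)
lemma fin2: "(w::real) \<noteq> 0 \<Longrightarrow> u = v + w \<Longrightarrow> u * w < 0 \<Longrightarrow> \<bar>v\<bar>/\<bar>w\<bar> - \<bar>u\<bar>/\<bar>w\<bar> = 1"
  by (auto simp: mult_less_0_iff diff_divide_distrib[symmetric] abs_if)
lemma fin3: "(w::real) \<noteq> 0 \<Longrightarrow> u = v + w \<Longrightarrow> u * v < 0 \<Longrightarrow> \<bar>u\<bar>/\<bar>w\<bar> + \<bar>v\<bar>/\<bar>w\<bar> = 1"
  by (auto simp: mult_less_0_iff add_divide_distrib[symmetric] abs_if)

lemma sq_sym: "(sin ((b - a)/2))^2 = (sin ((a - b)/2))^2" for a b :: real
proof -
  have "(b - a)/2 = - ((a - b)/2)" by (simp add: minus_divide_left)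
  thus ?thesis by (simp only: sin_minus) simp
qed

lemma sep_real:
  fixes t1 t2 t3 t4 :: real
  assumes rg: "0 \<le> t1" "t1 < 2 * pi" "0 \<le> t2" "t2 < 2 * pi" "0 \<le> t3" "t3 < 2 * pi" "0 \<le> t4" "t4 < 2 * pi"
    and nz: "sin ((t1-t2)/2) \<noteq> 0" "sin ((t1-t3)/2) \<noteq> 0" "sin ((t1-t4)/2) \<noteq> 0"
            "sin ((t2-t3)/2) \<noteq> 0" "sin ((t2-t4)/2) \<noteq> 0" "sin ((t3-t4)/2) \<noteq> 0"
  defines "X1 \<equiv> (cos (t3-t1) - 1) * (cos (t4-t2) - 1) / ((cos (t4-t1) - 1) * (cos (t3-t2) - 1))"
      and "X2 \<equiv> (cos (t2-t1) - 1) * (cos (t4-t3) - 1) / ((cos (t4-t1) - 1) * (cos (t2-t3) - 1))"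
  shows "(separates t1 t3 t2 t4 \<longrightarrow> sqrt X1 - sqrt X2 = 1) \<and>
         (separates t1 t2 t3 t4 \<longrightarrow> sqrt X2 - sqrt X1 = 1) \<and>
         (separates t1 t4 t2 t3 \<longrightarrow> sqrt X1 + sqrt X2 = 1)"
proof -
  define S12 where "S12 = sin ((t1-t2)/2)"
  define S13 where "S13 = sin ((t1-t3)/2)"
  define S14 where "S14 = sin ((t1-t4)/2)"
  define S23 where "S23 = sin ((t2-t3)/2)"
  define S24 where "S24 = sin ((t2-t4)/2)"
  define S34 where "S34 = sin ((t3-t4)/2)"
  have c: "cos (t3-t1) - 1 = -2 * S13^2" "cos (t4-t2) - 1 = -2 * S24^2" "cos (t4-t1) - 1 = -2 * S14^2"
     "cos (t3-t2) - 1 = -2 * S23^2" "cos (t2-t1) - 1 = -2 * S12^2" "cos (t4-t3) - 1 = -2 * S34^2"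
     "cos (t2-t3) - 1 = -2 * S23^2"
    unfolding S12_def S13_def S14_def S23_def S24_def S34_def cos_m1 sq_sym by simp_all
  define u where "u = S13 * S24"
  define v where "v = S12 * S34"
  define w where "w = S14 * S23"
  have wnz: "w \<noteq> 0" using nz by (simp add: w_def S14_def S23_def)
  have X1e: "X1 = (u / w)^2" unfolding X1_def c u_def w_def by (simp add: power2_eq_square field_simps)
  have X2e: "X2 = (v / w)^2" unfolding X2_def c v_def w_def by (simp add: power2_eq_square field_simps)
  have sX: "sqrt X1 = \<bar>u\<bar> / \<bar>w\<bar>" "sqrt X2 = \<bar>v\<bar> / \<bar>w\<bar>"
    unfolding X1e X2e real_sqrt_abs by (simp_all add: abs_divide)
  have pt: "u = v + w"
    using ptolemy[of "t1/2" "t3/2" "t2/2" "t4/2"]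
    unfolding u_def v_def w_def S12_def S13_def S14_def S23_def S24_def S34_def
    by (simp add: diff_divide_distrib)
  have d: "t1 \<noteq> t2" "t1 \<noteq> t3" "t1 \<noteq> t4" "t2 \<noteq> t3" "t2 \<noteq> t4" "t3 \<noteq> t4" using nz by auto
  obtain P12 where P12: "P12 > 0" "S12 = P12 * (t1 - t2)"
    using pos_factor sin_half_sign[OF rg(1,2,3,4) d(1)] unfolding S12_def by blast
  obtain P13 where P13: "P13 > 0" "S13 = P13 * (t1 - t3)"
    using pos_factor sin_half_sign[OF rg(1,2,5,6) d(2)] unfolding S13_def by blast
  obtain P14 where P14: "P14 > 0" "S14 = P14 * (t1 - t4)"
    using pos_factor sin_half_sign[OF rg(1,2,7,8) d(3)] unfolding S14_def by blast
  obtain P23 where P23: "P23 > 0" "S23 = P23 * (t2 - t3)"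
    using pos_factor sin_half_sign[OF rg(3,4,5,6) d(4)] unfolding S23_def by blast
  obtain P24 where P24: "P24 > 0" "S24 = P24 * (t2 - t4)"
    using pos_factor sin_half_sign[OF rg(3,4,7,8) d(5)] unfolding S24_def by blast
  obtain P34 where P34: "P34 > 0" "S34 = P34 * (t3 - t4)"
    using pos_factor sin_half_sign[OF rg(5,6,7,8) d(6)] unfolding S34_def by blast
  have one: "separates t1 t3 t2 t4 \<Longrightarrow> v * w > 0"
  proof -
    assume s: "separates t1 t3 t2 t4"
    have "((t2 - t1) * (t2 - t3)) * ((t4 - t1) * (t4 - t3)) < 0"
      using s sep_iff[of t2 t1 t3 t4] d by auto
    hence E: "0 < - (((t2 - t1) * (t2 - t3)) * ((t4 - t1) * (t4 - t3)))" by linarith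
    have e: "v * w = (P12 * P34 * P14 * P23) * (- (((t2 - t1) * (t2 - t3)) * ((t4 - t1) * (t4 - t3))))"
      unfolding v_def w_def P12(2) P34(2) P14(2) P23(2) by (simp add: algebra_simps)
    have "P12 * P34 * P14 * P23 > 0" using P12 P34 P14 P23 by simp
    thus ?thesis unfolding e using E by (rule mult_pos_pos)
  qed
  have two: "separates t1 t2 t3 t4 \<Longrightarrow> u * w < 0"
  proof -
    assume s: "separates t1 t2 t3 t4"
    have "((t3 - t1) * (t3 - t2)) * ((t4 - t1) * (t4 - t2)) < 0"
      using s sep_iff[of t3 t1 t2 t4] d by auto
    moreover have "u * w = (P13 * P24 * P14 * P23) * (((t3 - t1) * (t3 - t2)) * ((t4 - t1) * (t4 - t2)))"
      unfolding u_def w_def P13(2) P24(2) P14(2) P23(2) by (simp add: algebra_simps)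
    moreover have "P13 * P24 * P14 * P23 > 0" using P13 P24 P14 P23 by simp
    ultimately show ?thesis by (simp add: mult_less_0_iff)
  qed
  have three: "separates t1 t4 t2 t3 \<Longrightarrow> u * v < 0"
  proof -
    assume s: "separates t1 t4 t2 t3"
    have "((t2 - t1) * (t2 - t4)) * ((t3 - t1) * (t3 - t4)) < 0"
      using s sep_iff[of t2 t1 t4 t3] d by auto
    moreover have "u * v = (P13 * P24 * P12 * P34) * (((t2 - t1) * (t2 - t4)) * ((t3 - t1) * (t3 - t4)))"
      unfolding u_def v_def P13(2) P24(2) P12(2) P34(2) by (simp add: algebra_simps)
    moreover have "P13 * P24 * P12 * P34 > 0" using P13 P24 P12 P34 by simp
    ultimately show ?thesis by (simp add: mult_less_0_iff)
  qed
  show ?thesis unfolding sX using one two three fin1[OF wnz pt] fin2[OF wnz pt] fin3[OF wnz pt] by blast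
qed

lemma std_comp: "std_R_pt t $ 1 = of_real (1 + cos t)" "std_R_pt t $ 2 = of_real (sin t)"
  "std_R_pt t $ 3 = of_real (- (1 - cos t) / 2)"
  by (simp_all add: std_R_pt_def)

lemma herm_std: "herm (std_R_pt a) (std_R_pt b) = of_real (cos (a - b) - 1)"
proof -
  have "herm (std_R_pt a) (std_R_pt b) = of_real ((1 + cos a) * (- (1 - cos b) / 2) + sin a * sin b
      + (- (1 - cos a) / 2) * (1 + cos b))"
    by (simp only: herm_expand std_comp complex_cnj_complex_of_real of_real_mult[symmetric] of_real_add[symmetric])
  also have "\<dots> = of_real (cos (a - b) - 1)"
    by (rule arg_cong[where f=complex_of_real]) (simp add: cos_diff field_simps)
  finally show ?thesis .
qed

lemma param_unpack:
  assumes "R_circle_param A t p"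
  shows "unitary21 A \<and> 0 \<le> t \<and> t < 2 * pi \<and> (\<exists>c. c \<noteq> 0 \<and> p = c *s (A *v std_R_pt t))"
  using assms unfolding R_circle_param_def same_point_def by blast

lemma sin_nz_of_herm:
  assumes "unitary21 A" "herm (c *s (A *v std_R_pt a)) (d *s (A *v std_R_pt b)) \<noteq> 0"
  shows "sin ((a - b)/2) \<noteq> 0"
proof
  assume "sin ((a - b)/2) = 0"
  hence "cos (a - b) - 1 = 0" using cos_m1[of "a - b"] by simp
  thus False using assms by (simp add: herm_lift herm_std)
qed

lemma sep_part:
  fixes p1 p2 p3 p4 :: "complex^3"
  assumes nz: "herm p1 p2 \<noteq> 0" "herm p1 p3 \<noteq> 0" "herm p1 p4 \<noteq> 0"
            "herm p2 p3 \<noteq> 0" "herm p2 p4 \<noteq> 0" "herm p3 p4 \<noteq> 0"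
    and R: "R_circle_param A t1 p1" "R_circle_param A t2 p2" "R_circle_param A t3 p3" "R_circle_param A t4 p4"
  shows "(separates t1 t3 t2 t4 \<longrightarrow> sqrt (Re (KR_cross p1 p2 p3 p4)) - sqrt (Re (KR_cross p1 p3 p2 p4)) = 1) \<and>
         (separates t1 t2 t3 t4 \<longrightarrow> sqrt (Re (KR_cross p1 p3 p2 p4)) - sqrt (Re (KR_cross p1 p2 p3 p4)) = 1) \<and>
         (separates t1 t4 t2 t3 \<longrightarrow> sqrt (Re (KR_cross p1 p2 p3 p4)) + sqrt (Re (KR_cross p1 p3 p2 p4)) = 1)"
proof -
  obtain c1 where 1: "unitary21 A" "0 \<le> t1" "t1 < 2 * pi" "c1 \<noteq> 0" "p1 = c1 *s (A *v std_R_pt t1)"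
    using param_unpack[OF R(1)] by blast
  obtain c2 where 2: "0 \<le> t2" "t2 < 2 * pi" "c2 \<noteq> 0" "p2 = c2 *s (A *v std_R_pt t2)"
    using param_unpack[OF R(2)] by blast
  obtain c3 where 3: "0 \<le> t3" "t3 < 2 * pi" "c3 \<noteq> 0" "p3 = c3 *s (A *v std_R_pt t3)"
    using param_unpack[OF R(3)] by blast
  obtain c4 where 4: "0 \<le> t4" "t4 < 2 * pi" "c4 \<noteq> 0" "p4 = c4 *s (A *v std_R_pt t4)"
    using param_unpack[OF R(4)] by blast
  have s: "sin ((t1-t2)/2) \<noteq> 0" "sin ((t1-t3)/2) \<noteq> 0" "sin ((t1-t4)/2) \<noteq> 0"
          "sin ((t2-t3)/2) \<noteq> 0" "sin ((t2-t4)/2) \<noteq> 0" "sin ((t3-t4)/2) \<noteq> 0"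
    using nz sin_nz_of_herm[OF 1(1)] 1(5) 2(4) 3(4) 4(4) by metis+
  have X1: "Re (KR_cross p1 p2 p3 p4) = (cos (t3-t1) - 1) * (cos (t4-t2) - 1) / ((cos (t4-t1) - 1) * (cos (t3-t2) - 1))"
    unfolding 1(5) 2(4) 3(4) 4(4) KR_lift[OF 1(1) 1(4) 2(3) 3(3) 4(3)]
    by (simp add: KR_cross_def herm_std del: of_real_diff)
  have X2: "Re (KR_cross p1 p3 p2 p4) = (cos (t2-t1) - 1) * (cos (t4-t3) - 1) / ((cos (t4-t1) - 1) * (cos (t2-t3) - 1))"
    unfolding 1(5) 2(4) 3(4) 4(4) KR_lift[OF 1(1) 1(4) 3(3) 2(3) 4(3)]
    by (simp add: KR_cross_def herm_std del: of_real_diff)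
  show ?thesis unfolding X1 X2 using sep_real[OF 1(2,3) 2(1,2) 3(1,2) 4(1,2) s] .
qed

lemma herm_r_nz: "unitary21 A \<Longrightarrow> herm (a *s (A *v r)) (b *s (A *v s)) \<noteq> 0 \<Longrightarrow> herm r s \<noteq> 0"
  by (auto simp: herm_lift)

lemma cmod_herm_sym: "cmod (herm w z) = cmod (herm z w)"
  by (metis complex_mod_cnj herm_cnj)

theorem theorem3p1:
  fixes p1 p2 p3 p4 :: "complex^3"
  assumes "null_vec p1" "null_vec p2" "null_vec p3" "null_vec p4"
    and "\<not> same_point p1 p2" "\<not> same_point p1 p3" "\<not> same_point p1 p4"
    and "\<not> same_point p2 p3" "\<not> same_point p2 p4" "\<not> same_point p3 p4"
  shows
    "let X1 = KR_cross p1 p2 p3 p4; X2 = KR_cross p1 p3 p2 p4 in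
       sqrt (cmod X1) + sqrt (cmod X2) \<ge> 1 \<and>
       -1 \<le> sqrt (cmod X1) - sqrt (cmod X2) \<and> sqrt (cmod X1) - sqrt (cmod X2) \<le> 1 \<and>
       ((sqrt (cmod X1) + sqrt (cmod X2) = 1 \<or> sqrt (cmod X1) - sqrt (cmod X2) = -1 \<or>
         sqrt (cmod X1) - sqrt (cmod X2) = 1) \<longleftrightarrow> concyclic_R p1 p2 p3 p4) \<and>
       (concyclic_R p1 p2 p3 p4 \<longrightarrow>
          X1 \<in> \<real> \<and> Re X1 > 0 \<and> X2 \<in> \<real> \<and> Re X2 > 0 \<and>
          (\<forall>A t1 t2 t3 t4.
             R_circle_param A t1 p1 \<and> R_circle_param A t2 p2 \<and>
             R_circle_param A t3 p3 \<and> R_circle_param A t4 p4 \<longrightarrow>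
             (separates t1 t3 t2 t4 \<longrightarrow> sqrt (Re X1) - sqrt (Re X2) = 1) \<and>
             (separates t1 t2 t3 t4 \<longrightarrow> sqrt (Re X2) - sqrt (Re X1) = 1) \<and>
             (separates t1 t4 t2 t3 \<longrightarrow> sqrt (Re X1) + sqrt (Re X2) = 1)))"
proof -
  note n = assms(1-4)
  have nz: "herm p1 p2 \<noteq> 0" "herm p1 p3 \<noteq> 0" "herm p1 p4 \<noteq> 0"
           "herm p2 p3 \<noteq> 0" "herm p2 p4 \<noteq> 0" "herm p3 p4 \<noteq> 0"
    using herm_nonzero assms by blast+
  have nz': "herm p2 p1 \<noteq> 0" "herm p3 p1 \<noteq> 0" "herm p4 p1 \<noteq> 0"
            "herm p3 p2 \<noteq> 0" "herm p4 p2 \<noteq> 0" "herm p4 p3 \<noteq> 0"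
    using nz herm_cnj by (metis complex_cnj_zero_iff)+
  have z: "herm p1 p1 = 0" "herm p2 p2 = 0" "herm p3 p3 = 0" "herm p4 p4 = 0"
    using n by (auto simp: null_vec_def)
  define g12 where "g12 = herm p1 p2"
  define g13 where "g13 = herm p1 p3"
  define g14 where "g14 = herm p1 p4"
  define g23 where "g23 = herm p2 p3"
  define g24 where "g24 = herm p2 p4"
  define g34 where "g34 = herm p3 p4"
  have rev: "herm p2 p1 = cnj g12" "herm p3 p1 = cnj g13" "herm p4 p1 = cnj g14"
            "herm p3 p2 = cnj g23" "herm p4 p2 = cnj g24" "herm p4 p3 = cnj g34"
    by (simp_all add: herm_cnj g12_def g13_def g14_def g23_def g24_def g34_def)
  have D: "g12*cnj g12*g34*cnj g34 - g12*g23*g34*cnj g14 - g12*g24*cnj g13*cnj g34 - g13*cnj g12*g34*cnj g24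
     + g13*g24*cnj g13*cnj g24 - g13*g24*cnj g23*cnj g14 - g14*cnj g12*cnj g23*cnj g34 - g14*g23*cnj g13*cnj g24
     + g14*g23*cnj g23*cnj g14 = 0"
  proof -
    have G: "herm p1 p2*herm p2 p1*herm p3 p4*herm p4 p3 - herm p1 p2*herm p2 p3*herm p3 p4*herm p4 p1
      - herm p1 p2*herm p2 p4*herm p3 p1*herm p4 p3 - herm p1 p3*herm p2 p1*herm p3 p4*herm p4 p2
      + herm p1 p3*herm p2 p4*herm p3 p1*herm p4 p2 - herm p1 p3*herm p2 p4*herm p3 p2*herm p4 p1
      - herm p1 p4*herm p2 p1*herm p3 p2*herm p4 p3 - herm p1 p4*herm p2 p3*herm p3 p1*herm p4 p2
      + herm p1 p4*herm p2 p3*herm p3 p2*herm p4 p1 = 0"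
      using gram4_full[of p1 p2 p3 p4] z by simp
    show ?thesis using G unfolding rev g12_def g13_def g14_def g23_def g24_def g34_def
      by (simp add: algebra_simps)
  qed
  define A where "A = cmod g12 * cmod g34"
  define B where "B = cmod g13 * cmod g24"
  define C where "C = cmod g14 * cmod g23"
  define T1 where "T1 = g12*g23*g34*cnj g14"
  define T2 where "T2 = g13*cnj g23*g24*cnj g14"
  define T3 where "T3 = g12*g24*cnj g34*cnj g13"
  have pos: "A > 0" "B > 0" "C > 0"
    using nz by (simp_all add: A_def B_def C_def g12_def g13_def g14_def g23_def g24_def g34_def)
  have le: "Re T1 \<le> A*C" "Re T2 \<le> B*C" "Re T3 \<le> A*B"
  proof -
    have "cmod T1 = A*C" "cmod T2 = B*C" "cmod T3 = A*B"
      by (simp_all add: T1_def T2_def T3_def A_def B_def C_def norm_mult)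
    thus "Re T1 \<le> A*C" "Re T2 \<le> B*C" "Re T3 \<le> A*B" using complex_Re_le_cmod by metis+
  qed
  have eq: "A^2 + B^2 + C^2 = 2 * Re T1 + 2 * Re T2 + 2 * Re T3"
    using D_core[OF D] unfolding A_def B_def C_def T1_def T2_def T3_def .
  have cm: "cmod T1 = A*C" "cmod T2 = B*C" "cmod T3 = A*B"
    by (simp_all add: T1_def T2_def T3_def A_def B_def C_def norm_mult)
  have Tc: "T1 = cyc p1 p2 p3 p4" "T2 = cyc p1 p3 p2 p4" "T3 = cyc p1 p2 p4 p3"
    by (simp_all add: T1_def T2_def T3_def cyc_def rev g12_def g13_def g14_def g23_def g24_def g34_def)
  define X1 where "X1 = KR_cross p1 p2 p3 p4"
  define X2 where "X2 = KR_cross p1 p3 p2 p4"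
  have cX: "cmod X1 = B / C" "cmod X2 = A / C"
    by (simp_all add: X1_def X2_def KR_cross_def norm_mult norm_divide rev A_def B_def C_def
        g12_def g13_def g14_def g23_def g24_def g34_def mult.commute)
  note H = heron_core[OF pos le eq]
  have iff: "(sqrt (cmod X1) + sqrt (cmod X2) = 1 \<or> sqrt (cmod X1) - sqrt (cmod X2) = -1 \<or>
         sqrt (cmod X1) - sqrt (cmod X2) = 1) \<longleftrightarrow> concyclic_R p1 p2 p3 p4"
  proof -
    have "(sqrt (cmod X1) + sqrt (cmod X2) = 1 \<or> sqrt (cmod X1) - sqrt (cmod X2) = -1 \<or>
         sqrt (cmod X1) - sqrt (cmod X2) = 1) \<longleftrightarrow> (Re T1 = A*C \<and> Re T2 = B*C \<and> Re T3 = A*B)"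
      unfolding cX using H(4) .
    also have "\<dots> \<longleftrightarrow> concyclic_R p1 p2 p3 p4"
    proof
      assume "Re T1 = A*C \<and> Re T2 = B*C \<and> Re T3 = A*B"
      hence "Re (cyc p1 p2 p3 p4) = cmod (cyc p1 p2 p3 p4)" "Re (cyc p1 p3 p2 p4) = cmod (cyc p1 p3 p2 p4)"
         "Re (cyc p1 p2 p4 p3) = cmod (cyc p1 p2 p4 p3)" using cm Tc by simp_all
      thus "concyclic_R p1 p2 p3 p4" using conc_of_T[OF n nz] by blast
    next
      assume cc: "concyclic_R p1 p2 p3 p4"
      obtain U r1 r2 r3 r4 c1 c2 c3 c4 where u: "unitary21 U"
        "real_vec r1" "real_vec r2" "real_vec r3" "real_vec r4"
        "null_vec r1" "null_vec r2" "null_vec r3" "null_vec r4"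
        "c1 \<noteq> 0" "c2 \<noteq> 0" "c3 \<noteq> 0" "c4 \<noteq> 0"
        and P: "p1 = c1 *s (U *v r1)" "p2 = c2 *s (U *v r2)" "p3 = c3 *s (U *v r3)" "p4 = c4 *s (U *v r4)"
        using concyc_unpack[OF cc] by (elim exE conjE) (rule that; assumption)
      have rz: "herm r1 r2 \<noteq> 0" "herm r1 r3 \<noteq> 0" "herm r1 r4 \<noteq> 0" "herm r2 r3 \<noteq> 0"
         "herm r2 r4 \<noteq> 0" "herm r3 r4 \<noteq> 0" "herm r2 r1 \<noteq> 0" "herm r3 r1 \<noteq> 0" "herm r4 r1 \<noteq> 0"
         "herm r3 r2 \<noteq> 0" "herm r4 r2 \<noteq> 0" "herm r4 r3 \<noteq> 0"
        using nz nz' herm_r_nz[OF u(1)] unfolding P by blast+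
      have "Re T1 = cmod T1" unfolding Tc P
        by (rule cyc_lift_pos) (use u rz in auto)
      moreover have "Re T2 = cmod T2" unfolding Tc P
        by (rule cyc_lift_pos) (use u rz in auto)
      moreover have "Re T3 = cmod T3" unfolding Tc P
        by (rule cyc_lift_pos) (use u rz in auto)
      ultimately show "Re T1 = A*C \<and> Re T2 = B*C \<and> Re T3 = A*B" using cm by simp
    qed
    finally show ?thesis .
  qed
  have conc: "concyclic_R p1 p2 p3 p4 \<longrightarrow>
          X1 \<in> \<real> \<and> Re X1 > 0 \<and> X2 \<in> \<real> \<and> Re X2 > 0 \<and>
          (\<forall>A t1 t2 t3 t4.
             R_circle_param A t1 p1 \<and> R_circle_param A t2 p2 \<and>
             R_circle_param A t3 p3 \<and> R_circle_param A t4 p4 \<longrightarrow>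
             (separates t1 t3 t2 t4 \<longrightarrow> sqrt (Re X1) - sqrt (Re X2) = 1) \<and>
             (separates t1 t2 t3 t4 \<longrightarrow> sqrt (Re X2) - sqrt (Re X1) = 1) \<and>
             (separates t1 t4 t2 t3 \<longrightarrow> sqrt (Re X1) + sqrt (Re X2) = 1))"
  proof
    assume cc: "concyclic_R p1 p2 p3 p4"
    obtain U r1 r2 r3 r4 c1 c2 c3 c4 where u: "unitary21 U"
      "real_vec r1" "real_vec r2" "real_vec r3" "real_vec r4"
      "null_vec r1" "null_vec r2" "null_vec r3" "null_vec r4"
      "c1 \<noteq> 0" "c2 \<noteq> 0" "c3 \<noteq> 0" "c4 \<noteq> 0"
      and P: "p1 = c1 *s (U *v r1)" "p2 = c2 *s (U *v r2)" "p3 = c3 *s (U *v r3)" "p4 = c4 *s (U *v r4)"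
      using concyc_unpack[OF cc] by (elim exE conjE) (rule that; assumption)
    have rz: "herm r1 r2 \<noteq> 0" "herm r1 r3 \<noteq> 0" "herm r1 r4 \<noteq> 0" "herm r2 r3 \<noteq> 0"
       "herm r2 r4 \<noteq> 0" "herm r3 r4 \<noteq> 0" "herm r2 r1 \<noteq> 0" "herm r3 r1 \<noteq> 0" "herm r4 r1 \<noteq> 0"
       "herm r3 r2 \<noteq> 0" "herm r4 r2 \<noteq> 0" "herm r4 r3 \<noteq> 0"
      using nz nz' herm_r_nz[OF u(1)] unfolding P by blast+
    have x1: "X1 = KR_cross r1 r2 r3 r4" unfolding X1_def P using KR_lift u by blast
    have x2: "X2 = KR_cross r1 r3 r2 r4" unfolding X2_def P using KR_lift u by blast
    have k1: "X1 \<in> \<real> \<and> Re X1 > 0" unfolding x1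
      by (rule KR_real_pos) (use u rz in auto)
    have k2: "X2 \<in> \<real> \<and> Re X2 > 0" unfolding x2
      by (rule KR_real_pos) (use u rz in auto)
    show "X1 \<in> \<real> \<and> Re X1 > 0 \<and> X2 \<in> \<real> \<and> Re X2 > 0 \<and>
          (\<forall>A t1 t2 t3 t4.
             R_circle_param A t1 p1 \<and> R_circle_param A t2 p2 \<and>
             R_circle_param A t3 p3 \<and> R_circle_param A t4 p4 \<longrightarrow>
             (separates t1 t3 t2 t4 \<longrightarrow> sqrt (Re X1) - sqrt (Re X2) = 1) \<and>
             (separates t1 t2 t3 t4 \<longrightarrow> sqrt (Re X2) - sqrt (Re X1) = 1) \<and>
             (separates t1 t4 t2 t3 \<longrightarrow> sqrt (Re X1) + sqrt (Re X2) = 1))"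
      using k1 k2 sep_part[OF nz] unfolding X1_def X2_def by blast
  qed
  show ?thesis unfolding Let_def X1_def[symmetric] X2_def[symmetric]
    using H(1-3) cX iff conc by simp
qed

end
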